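(* Let $f$, $Q$, $L$, $d_Q$ be as in the context, let $x^*\in Q$ be a minimizer of $f$ over $Q$ with $f^*=f(x^* )$, let $T\in\mathbb{N}_0$, and let the sequences $(z_t)$, $(\hat x_t)$, $(u_t)$, $(\Gamma_t)$, $(L_t)$ be generated by the algorithm described in the context. Then \[ f(u_T)-f^*\le\frac{1}{\Gamma_T}\Big[L_Td_Q(x^* )+\sum_{t=0}^{T-1}(L_t-L_{t+1})\Big(d_Q(z_{t+1})-\tfrac12\|z_t-\hat x_{t+1}\|^2\Big)\Big]. \]
   Context: $\mathbb{R}^n$ carries the standard scalar product $\langle\cdot,\cdot\rangle$ and a (possibly different) norm $\|\cdot\|$, with dual norm $\|u\|_*=\max\{\langle u,x\rangle:\|x\|=1\}$. $Q\subseteq\mathbb{R}^n$ is closed and convex; $f:\mathbb{R}^n\to\mathbb{R}$ is convex, differentiable, attains its minimum on $Q$, and $L>0$ satisfies $\|\nabla f(x)-\nabla f(y)\|_*\le L\|x-y\|$ for all $x,y\in Q$. A distance-generating function for $Q$ is $d_Q:Q\to\mathbb{R}_{\ge0}$ that is continuous on $Q$, strongly convex with modulus 1 w.r.t. $\|\cdot\|$, and whose subdifferential admits a continuous selection $d_Q'$ on $Q^o:=\{x\in Q:\partial d_Q(x)\neq\emptyset\}$. For $z\in Q^o$, $V_z(x)=d_Q(x)-d_Q(z)-\langle d_Q'(z),x-z\rangle$ and $\mathrm{Prox}_{Q,z}(s)=\arg\min_{x\in Q}\{\langle s,x-z\rangle+V_z(x)\}$. The $d_Q$-center is $c(d_Q)=\arg\min_{x\in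 Q}d_Q(x)$, and it is assumed that $d_Q(c(d_Q))=0$. Algorithm: choose $T\in\mathbb{N}_0$ and numbers $(\gamma_t)_{t=0}^{T+1}$ with $\gamma_0\in(0,1]$, $\gamma_t\ge0$ and $\gamma_t^2\le\Gamma_t:=\sum_{k=0}^t\gamma_k$ for all $0\le t\le T+1$. Set $L_0=L$, $x_0=c(d_Q)$, $u_0=\arg\min_{x\in Q}\{\gamma_0(f(x_0)+\langle\nabla f(x_0),x-x_0\rangle)+L_0d_Q(x)\}$, $z_0=u_0$, $\tau_0=\gamma_1/\Gamma_1$, $x_1=\tau_0z_0+(1-\tau_0)u_0$, $\hat x_1=\mathrm{Prox}_{Q,z_0}(\gamma_1\nabla f(x_1)/L_0)$, $u_1=\tau_0\hat x_1+(1-\tau_0)u_0$. For $t=1,\dots,T$: choose $0<L_t\le L$ with $f(u_t)\le f(x_t)+\langle\nabla f(x_t),u_t-x_t\rangle+\frac{L_t}{2}\|u_t-x_t\|^2$; set $z_t=\arg\min_{x\in Q}\{\sum_{k=0}^t\gamma_k(f(x_k)+\langle\nabla f(x_k),x-x_k\rangle)+L_td_Q(x)\}$; set $\tau_t=\gamma_{t+1}/\Gamma_{t+1}$ and $x_{t+1}=\tau_tz_t+(1-\tau_t)u_t$; set $\hat x_{t+1}=\mathrm{Prox}_{Q,z_t}(\gamma_{t+1}\nabla f(x_{t+1})/L_t)$; set $u_{t+1}=\tau_t\hat x_{t+1}+(1-\tau_t)u_t$. *)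

theory Defs
  imports "HOL-Analysis.Analysis"
begin

definition is_norm :: "('a::euclidean_space \<Rightarrow> real) \<Rightarrow> bool" where
  "is_norm N \<longleftrightarrow> (\<forall>x. N x = 0 \<longleftrightarrow> x = 0) \<and> (\<forall>a x. N (a *\<^sub>R x) = \<bar>a\<bar> * N x)
      \<and> (\<forall>x y. N (x + y) \<le> N x + N y)"

definition dual_norm :: "('a::euclidean_space \<Rightarrow> real) \<Rightarrow> 'a \<Rightarrow> real" where
  "dual_norm N u = Sup ((\<lambda>x. u \<bullet> x) ` {x. N x = 1})"

definition strongly_convex_1 :: "('a::euclidean_space \<Rightarrow> real) \<Rightarrow> 'a set \<Rightarrow> ('a \<Rightarrow> real) \<Rightarrow> bool" where
  "strongly_convex_1 N Q d \<longleftrightarrow> (\<forall>x\<in>Q. \<forall>y\<in>Q. \<forall>a::real. 0 \<le> a \<and> a \<le> 1 \<longrightarrow>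
      d (a *\<^sub>R x + (1 - a) *\<^sub>R y) \<le> a * d x + (1 - a) * d y - 1/2 * a * (1 - a) * (N (x - y))\<^sup>2)"

definition subdiff_on :: "'a set \<Rightarrow> ('a::euclidean_space \<Rightarrow> real) \<Rightarrow> 'a \<Rightarrow> 'a set" where
  "subdiff_on Q d x = {g. \<forall>y\<in>Q. d y \<ge> d x + g \<bullet> (y - x)}"

definition dom_subdiff :: "'a set \<Rightarrow> ('a::euclidean_space \<Rightarrow> real) \<Rightarrow> 'a set" where
  "dom_subdiff Q d = {x\<in>Q. subdiff_on Q d x \<noteq> {}}"

definition argmin_on :: "'a set \<Rightarrow> ('a \<Rightarrow> real) \<Rightarrow> 'a \<Rightarrow> bool" where
  "argmin_on Q g x \<longleftrightarrow> x \<in> Q \<and> (\<forall>y\<in>Q. g x \<le> g y)"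

definition bregman :: "('a::euclidean_space \<Rightarrow> real) \<Rightarrow> ('a \<Rightarrow> 'a) \<Rightarrow> 'a \<Rightarrow> 'a \<Rightarrow> real" where
  "bregman d d' z x = d x - d z - d' z \<bullet> (x - z)"

definition is_prox :: "'a set \<Rightarrow> ('a::euclidean_space \<Rightarrow> real) \<Rightarrow> ('a \<Rightarrow> 'a) \<Rightarrow> 'a \<Rightarrow> 'a \<Rightarrow> 'a \<Rightarrow> bool" where
  "is_prox Q d d' z s p \<longleftrightarrow> argmin_on Q (\<lambda>x. s \<bullet> (x - z) + bregman d d' z x) p"

definition Gam :: "(nat \<Rightarrow> real) \<Rightarrow> nat \<Rightarrow> real" where
  "Gam \<gamma> t = (\<Sum>k\<le>t. \<gamma> k)"

end

theory Submission
  imports Defs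
begin


lemma le_eps:
  fixes a b C :: real
  assumes "\<And>t. 0 < t \<Longrightarrow> t \<le> 1 \<Longrightarrow> a \<le> b + t * C"
  shows "a \<le> b"
proof (rule ccontr)
  assume "\<not> a \<le> b"
  define t where "t = min 1 ((a - b) / (2 * (\<bar>C\<bar> + 1)))"
  have t0: "0 < t" "t \<le> 1" using \<open>\<not> a \<le> b\<close> by (auto simp: t_def)
  have "t * C \<le> t * (\<bar>C\<bar> + 1)" using t0 by (intro mult_left_mono) auto
  also have "\<dots> \<le> (a - b) / (2 * (\<bar>C\<bar> + 1)) * (\<bar>C\<bar> + 1)"
    by (intro mult_right_mono) (auto simp: t_def)
  also have "\<dots> = (a - b) / 2" by (simp add: field_simps)
  finally have "t * C \<le> (a - b) / 2" .
  moreover have "a \<le> b + t * C" using assms[OF t0] .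
  ultimately have "a - b \<le> (a - b) / 2" by linarith
  then show False using \<open>\<not> a \<le> b\<close> by (simp add: field_simps)
qed

lemma N_basic:
  assumes N: "is_norm N"
  shows "N 0 = 0" "N (- x) = N x" "N x \<ge> 0" "N (x - y) = N (y - x)"
    "N (c *\<^sub>R x) = \<bar>c\<bar> * N x" "N (x + y) \<le> N x + N y"
proof -
  show N0: "N 0 = 0" using N unfolding is_norm_def by auto
  show sc: "N (c *\<^sub>R x) = \<bar>c\<bar> * N x" for c x using N unfolding is_norm_def by auto
  show tri: "N (x + y) \<le> N x + N y" for x y using N unfolding is_norm_def by auto
  show neg: "N (- x) = N x" for x using sc[of "-1" x] by simp
  show "N x \<ge> 0" using tri[of x "-x"] neg[of x] N0 by simp
  show "N (x - y) = N (y - x)" using neg[of "x - y"] by simp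
qed

lemma N_sum:
  assumes N: "is_norm N" and "finite A"
  shows "N (sum g A) \<le> (\<Sum>i\<in>A. N (g i))"
  using assms(2)
proof (induction A rule: finite_induct)
  case empty then show ?case using N_basic[OF N] by simp
next
  case (insert a A)
  then show ?case using N_basic(6)[OF N, of "g a" "sum g A"] by simp
qed

lemma N_upper:
  fixes N :: "'a::euclidean_space \<Rightarrow> real"
  assumes N: "is_norm N"
  shows "\<exists>C\<ge>0. \<forall>x. N x \<le> C * norm x"
proof -
  define C where "C = (\<Sum>i\<in>(Basis::'a set). N i)"
  have C0: "C \<ge> 0" unfolding C_def by (intro sum_nonneg) (use N_basic[OF N] in auto)
  have "N x \<le> C * norm x" for x
  proof -
    have "N x = N (\<Sum>i\<in>Basis. (x \<bullet> i) *\<^sub>R i)" by (simp add: euclidean_representation)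
    also have "\<dots> \<le> (\<Sum>i\<in>Basis. N ((x \<bullet> i) *\<^sub>R i))" by (rule N_sum[OF N]) simp
    also have "\<dots> = (\<Sum>i\<in>Basis. \<bar>x \<bullet> i\<bar> * N i)" using N_basic(5)[OF N] by simp
    also have "\<dots> \<le> (\<Sum>i\<in>(Basis::'a set). norm x * N i)"
      by (intro sum_mono mult_right_mono) (auto simp: Basis_le_norm N_basic[OF N])
    also have "\<dots> = C * norm x" by (simp add: C_def sum_distrib_left mult.commute)
    finally show ?thesis .
  qed
  with C0 show ?thesis by blast
qed

lemma N_cont:
  fixes N :: "'a::euclidean_space \<Rightarrow> real"
  assumes N: "is_norm N"
  shows "continuous_on S N"
proof -
  obtain C where C: "C \<ge> 0" "\<And>x. N x \<le> C * norm x" using N_upper[OF N] by blast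
  have "\<bar>N x - N y\<bar> \<le> C * norm (x - y)" for x y
  proof -
    have "N x \<le> N y + N (x - y)" using N_basic(6)[OF N, of y "x - y"] by simp
    moreover have "N y \<le> N x + N (y - x)" using N_basic(6)[OF N, of x "y - x"] by simp
    moreover have "N (y - x) = N (x - y)" using N_basic(4)[OF N] by simp
    ultimately show ?thesis using C(2)[of "x - y"] by linarith
  qed
  then have "C *\<^sub>R dist x y \<ge> dist (N x) (N y)" for x y
    by (simp add: dist_real_def dist_norm)
  then have "lipschitz_on C UNIV N" by (intro lipschitz_onI) (auto simp: C)
  then have "continuous_on UNIV N" by (rule lipschitz_on_continuous_on)
  then show ?thesis by (rule continuous_on_subset) auto
qed

lemma N_lower:
  fixes N :: "'a::euclidean_space \<Rightarrow> real"
  assumes N: "is_norm N"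
  shows "\<exists>c>0. \<forall>x. c * norm x \<le> N x"
proof -
  let ?S = "sphere (0::'a) 1"
  have ne: "?S \<noteq> {}" by (simp add: sphere_eq_empty)
  obtain p where p: "p \<in> ?S" "\<And>y. y \<in> ?S \<Longrightarrow> N p \<le> N y"
    using continuous_attains_inf[OF compact_sphere ne N_cont[OF N]] by blast
  have "p \<noteq> 0" using p(1) by auto
  then have cpos: "N p > 0" using N N_basic(3)[OF N, of p] unfolding is_norm_def
    by (metis less_eq_real_def)
  have "N p * norm x \<le> N x" for x
  proof (cases "x = 0")
    case True then show ?thesis using N_basic[OF N] by simp
  next
    case False
    have "(1 / norm x) *\<^sub>R x \<in> ?S" using False by simp
    then have "N p \<le> N ((1 / norm x) *\<^sub>R x)" by (rule p(2))
    also have "\<dots> = N x / norm x" using N_basic(5)[OF N] by simp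
    finally show ?thesis using False by (simp add: field_simps)
  qed
  with cpos show ?thesis by blast
qed

lemma dual_bound:
  fixes N :: "'a::euclidean_space \<Rightarrow> real"
  assumes N: "is_norm N"
  shows "v \<bullet> h \<le> dual_norm N v * N h"
proof -
  obtain c where c: "c > 0" "\<And>x. c * norm x \<le> N x" using N_lower[OF N] by blast
  let ?S = "(\<lambda>x. v \<bullet> x) ` {x. N x = 1}"
  have bdd: "bdd_above ?S"
  proof (rule bdd_aboveI2)
    fix x assume "x \<in> {x. N x = 1}"
    then have "norm x \<le> 1 / c" using c(2)[of x] c(1) by (simp add: field_simps)
    then have "norm v * norm x \<le> norm v * (1 / c)" by (intro mult_left_mono) auto
    then show "v \<bullet> x \<le> norm v * (1 / c)" using norm_cauchy_schwarz[of v x] by linarith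
  qed
  show ?thesis
  proof (cases "h = 0")
    case True then show ?thesis using N_basic[OF N] by simp
  next
    case False
    then have Nh: "N h > 0" using N N_basic(3)[OF N, of h] unfolding is_norm_def
      by (metis less_eq_real_def)
    have "N ((1 / N h) *\<^sub>R h) = 1" using Nh N_basic(5)[OF N] by simp
    then have "v \<bullet> ((1 / N h) *\<^sub>R h) \<le> dual_norm N v"
      unfolding dual_norm_def
      by (intro cSup_upper bdd image_eqI[where x="(1 / N h) *\<^sub>R h"]) auto
    then have "(v \<bullet> h) / N h \<le> dual_norm N v" by simp
    then show ?thesis using Nh by (simp add: field_simps)
  qed
qed

lemma line_deriv:
  fixes f :: "'a::euclidean_space \<Rightarrow> real"
  assumes fd: "\<And>y. (f has_derivative (\<lambda>h. f' y \<bullet> h)) (at y)"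
  shows "((\<lambda>s. f (y + s *\<^sub>R h)) has_real_derivative (f' (y + s *\<^sub>R h) \<bullet> h)) (at s)"
proof -
  have "((\<lambda>s. y + s *\<^sub>R h) has_derivative (\<lambda>t. t *\<^sub>R h)) (at s)"
    by (auto intro!: derivative_eq_intros)
  from has_derivative_compose[OF this fd]
  have "((\<lambda>s. f (y + s *\<^sub>R h)) has_derivative (\<lambda>t. f' (y + s *\<^sub>R h) \<bullet> (t *\<^sub>R h))) (at s)" .
  moreover have "(\<lambda>t. f' (y + s *\<^sub>R h) \<bullet> (t *\<^sub>R h)) = (*) (f' (y + s *\<^sub>R h) \<bullet> h)"
    by (auto simp: fun_eq_iff)
  ultimately show ?thesis unfolding has_field_derivative_def by simp
qed

lemma grad_ineq:
  fixes f :: "'a::euclidean_space \<Rightarrow> real"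
  assumes cv: "convex_on UNIV f" and fd: "\<And>y. (f has_derivative (\<lambda>h. f' y \<bullet> h)) (at y)"
  shows "f y + f' y \<bullet> (w - y) \<le> f w"
proof -
  define h where "h = w - y"
  define g where "g = (\<lambda>s::real. f (y + s *\<^sub>R h))"
  have "convex_on UNIV g"
  proof (rule convex_onI)
    fix t a b :: real assume t: "t > 0" "t < 1"
    have "y + ((1 - t) *\<^sub>R a + t *\<^sub>R b) *\<^sub>R h = (1 - t) *\<^sub>R (y + a *\<^sub>R h) + t *\<^sub>R (y + b *\<^sub>R h)"
      by (simp add: algebra_simps)
    then show "g ((1 - t) *\<^sub>R a + t *\<^sub>R b) \<le> (1 - t) * g a + t * g b"
      unfolding g_def using convex_onD[OF cv, of t "y + a *\<^sub>R h" "y + b *\<^sub>R h"] t by simp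
  qed simp
  moreover have "(g has_field_derivative (f' y \<bullet> h)) (at 0 within UNIV)"
    using line_deriv[OF fd, of y h 0] unfolding g_def by simp
  ultimately have "g 1 - g 0 \<ge> (f' y \<bullet> h) * (1 - 0)"
    by (intro convex_on_imp_above_tangent) auto
  then show ?thesis by (simp add: g_def h_def)
qed

lemma smooth_ineq:
  fixes f :: "'a::euclidean_space \<Rightarrow> real"
  assumes N: "is_norm N" and Q: "convex Q"
    and fd: "\<And>y. (f has_derivative (\<lambda>h. f' y \<bullet> h)) (at y)"
    and lip: "\<And>y w. y \<in> Q \<Longrightarrow> w \<in> Q \<Longrightarrow> dual_norm N (f' y - f' w) \<le> Lf * N (y - w)"
    and Lf: "Lf \<ge> 0" and y: "y \<in> Q" and w: "w \<in> Q"
  shows "f w \<le> f y + f' y \<bullet> (w - y) + Lf / 2 * (N (w - y))\<^sup>2"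
proof -
  define h where "h = w - y"
  define g where "g = (\<lambda>s::real. f (y + s *\<^sub>R h) - s * (f' y \<bullet> h) - Lf / 2 * s\<^sup>2 * (N h)\<^sup>2)"
  have "g 1 \<le> g 0"
  proof (rule DERIV_nonpos_imp_nonincreasing[where f=g])
    fix s :: real assume s: "0 \<le> s" "s \<le> 1"
    have "(g has_real_derivative
        (f' (y + s *\<^sub>R h) \<bullet> h - f' y \<bullet> h - Lf / 2 * (2 * s) * (N h)\<^sup>2)) (at s)"
      unfolding g_def using line_deriv[OF fd, of y h s]
      by (auto intro!: derivative_eq_intros)
    moreover have "f' (y + s *\<^sub>R h) \<bullet> h - f' y \<bullet> h - Lf / 2 * (2 * s) * (N h)\<^sup>2 \<le> 0"
    proof -
      have ys: "y + s *\<^sub>R h \<in> Q"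
      proof -
        have "y + s *\<^sub>R h = (1 - s) *\<^sub>R y + s *\<^sub>R w" by (simp add: h_def algebra_simps)
        then show ?thesis using Q y w s by (simp add: convex_alt)
      qed
      have "(f' (y + s *\<^sub>R h) - f' y) \<bullet> h \<le> dual_norm N (f' (y + s *\<^sub>R h) - f' y) * N h"
        by (rule dual_bound[OF N])
      also have "\<dots> \<le> Lf * N (y + s *\<^sub>R h - y) * N h"
        by (intro mult_right_mono lip ys y) (use N_basic[OF N] in auto)
      also have "\<dots> = Lf * s * (N h)\<^sup>2" using N_basic(5)[OF N, of s h] s by (simp add: power2_eq_square)
      finally show ?thesis by (simp add: inner_diff_left)
    qed
    ultimately show "\<exists>D. (g has_real_derivative D) (at s) \<and> D \<le> 0" by blast
  qed simp
  then show ?thesis by (simp add: g_def h_def)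
qed

lemma growth:
  fixes g :: "'a::real_vector \<Rightarrow> real"
  assumes sc: "\<And>a. 0 \<le> a \<Longrightarrow> a \<le> 1 \<Longrightarrow>
      g (a *\<^sub>R y + (1 - a) *\<^sub>R p) \<le> a * g y + (1 - a) * g p - c / 2 * a * (1 - a) * M"
    and mn: "\<And>a. 0 \<le> a \<Longrightarrow> a \<le> 1 \<Longrightarrow> g p \<le> g (a *\<^sub>R y + (1 - a) *\<^sub>R p)"
  shows "g p + c / 2 * M \<le> g y"
proof (rule le_eps[where C = "c / 2 * M"])
  fix a :: real assume a: "0 < a" "a \<le> 1"
  have "a * g p \<le> a * g y - c / 2 * a * (1 - a) * M"
    using sc[of a] mn[of a] a by (simp add: algebra_simps)
  moreover have "a * (g y + a * (c / 2 * M)) - a * (g p + c / 2 * M) = a * g y - a * g p - c / 2 * a * (1 - a) * M"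
    by (simp add: field_simps)
  ultimately have "a * (g p + c / 2 * M) \<le> a * (g y + a * (c / 2 * M))"
    by linarith
  then show "g p + c / 2 * M \<le> g y + a * (c / 2 * M)" using a by simp
qed

lemma sc_affine:
  assumes sc: "strongly_convex_1 N Q d" and L: "L \<ge> 0" and y: "y \<in> Q" and p: "p \<in> Q"
    and a: "0 \<le> a" "a \<le> 1"
  shows "A + v \<bullet> (a *\<^sub>R y + (1 - a) *\<^sub>R p) + L * d (a *\<^sub>R y + (1 - a) *\<^sub>R p)
    \<le> a * (A + v \<bullet> y + L * d y) + (1 - a) * (A + v \<bullet> p + L * d p) - L / 2 * a * (1 - a) * (N (y - p))\<^sup>2"
proof -
  have "d (a *\<^sub>R y + (1 - a) *\<^sub>R p) \<le> a * d y + (1 - a) * d p - 1/2 * a * (1 - a) * (N (y - p))\<^sup>2"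
    using sc y p a unfolding strongly_convex_1_def by blast
  then have "L * d (a *\<^sub>R y + (1 - a) *\<^sub>R p) \<le> L * (a * d y + (1 - a) * d p - 1/2 * a * (1 - a) * (N (y - p))\<^sup>2)"
    using L by (rule mult_left_mono)
  then show ?thesis by (simp add: algebra_simps inner_add_right)
qed

lemma convex_comb_in:
  assumes "convex Q" "y \<in> Q" "p \<in> Q" "0 \<le> a" "a \<le> 1"
  shows "a *\<^sub>R y + (1 - a) *\<^sub>R p \<in> Q"
  using assms unfolding convex_def by auto

lemma V_growth:
  assumes N: "is_norm N" and Q: "convex Q" and sc: "strongly_convex_1 N Q d"
    and z: "z \<in> Q" and sg: "d' z \<in> subdiff_on Q d z" and y: "y \<in> Q"
  shows "1/2 * (N (y - z))\<^sup>2 \<le> bregman d d' z y"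
proof -
  define g where "g = (\<lambda>x. (- d z + d' z \<bullet> z) + (- d' z) \<bullet> x + 1 * d x)"
  have gb: "g x = bregman d d' z x" for x
    unfolding g_def bregman_def by (simp add: inner_diff_right)
  have "g z + 1 / 2 * (N (y - z))\<^sup>2 \<le> g y"
  proof (rule growth[where g=g and p=z and y=y])
    fix a :: real assume a: "0 \<le> a" "a \<le> 1"
    show "g (a *\<^sub>R y + (1 - a) *\<^sub>R z) \<le> a * g y + (1 - a) * g z - 1 / 2 * a * (1 - a) * (N (y - z))\<^sup>2"
      unfolding g_def using sc_affine[OF sc _ y z a, where L=1 and A="- d z + d' z \<bullet> z" and v="- d' z"] by simp
  next
    fix a :: real assume a: "0 \<le> a" "a \<le> 1"
    have "a *\<^sub>R y + (1 - a) *\<^sub>R z \<in> Q" by (rule convex_comb_in[OF Q y z a])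
    then show "g z \<le> g (a *\<^sub>R y + (1 - a) *\<^sub>R z)"
      using sg unfolding gb bregman_def subdiff_on_def by auto
  qed
  then show ?thesis unfolding gb by (simp add: bregman_def)
qed

lemma min_subgrad:
  assumes z: "z \<in> Q" and mn: "\<And>y. y \<in> Q \<Longrightarrow> v \<bullet> z + L * d z \<le> v \<bullet> y + L * d y" and L: "L > 0"
  shows "(- (1 / L) *\<^sub>R v) \<in> subdiff_on Q d z" "z \<in> dom_subdiff Q d"
proof -
  show *: "(- (1 / L) *\<^sub>R v) \<in> subdiff_on Q d z"
    unfolding subdiff_on_def
  proof safe
    fix y assume y: "y \<in> Q"
    have "L * d z \<le> L * d y + v \<bullet> (y - z)" using mn[OF y] by (simp add: inner_diff_right algebra_simps)
    then have "d z \<le> d y + (v \<bullet> (y - z)) / L" using L by (simp add: field_simps)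
    then have "d z - (1 / L) * (v \<bullet> (y - z)) \<le> d y" by simp
    then show "d z + - (1 / L) *\<^sub>R v \<bullet> (y - z) \<le> d y" by simp
  qed
  show "z \<in> dom_subdiff Q d" using * z unfolding dom_subdiff_def by auto
qed

lemma sc_convex:
  assumes sc: "strongly_convex_1 N Q d" and N: "is_norm N"
    and y: "y \<in> Q" and p: "p \<in> Q" and a: "0 \<le> a" "a \<le> 1"
  shows "d (a *\<^sub>R y + (1 - a) *\<^sub>R p) \<le> a * d y + (1 - a) * d p"
proof -
  have "d (a *\<^sub>R y + (1 - a) *\<^sub>R p) \<le> a * d y + (1 - a) * d p - 1/2 * a * (1 - a) * (N (y - p))\<^sup>2"
    using sc y p a unfolding strongly_convex_1_def by blast
  moreover have "0 \<le> 1/2 * a * (1 - a) * (N (y - p))\<^sup>2" using a by simp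
  ultimately show ?thesis by linarith
qed

lemma norm_expand:
  fixes a b :: "'a::real_inner"
  shows "(norm (a + t *\<^sub>R b))\<^sup>2 = (norm a)\<^sup>2 + 2 * t * (a \<bullet> b) + t\<^sup>2 * (norm b)\<^sup>2"
  unfolding power2_norm_eq_inner by (simp add: inner_add_left inner_add_right inner_commute algebra_simps power2_eq_square)


lemma dense_dom:
  fixes d :: "'a::euclidean_space \<Rightarrow> real"
  assumes Qc: "closed Q" and Q: "convex Q" and dc: "continuous_on Q d"
    and dn: "\<And>y. y \<in> Q \<Longrightarrow> d y \<ge> 0" and sc: "strongly_convex_1 N Q d" and N: "is_norm N"
    and w: "w \<in> Q" and e: "e > 0"
  shows "\<exists>m\<in>dom_subdiff Q d. norm (m - w) < e"
proof -
  define K where "K = (d w + 1) + (d w + 1) / e\<^sup>2"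
  have dw: "d w \<ge> 0" using dn w by simp
  have K1: "K \<ge> d w + 1" unfolding K_def using dw by simp
  have e2: "e\<^sup>2 \<noteq> 0" using e by simp
  have "K * e\<^sup>2 = (d w + 1) * e\<^sup>2 + ((d w + 1) / e\<^sup>2) * e\<^sup>2" unfolding K_def
    by (rule distrib_right)
  also have "((d w + 1) / e\<^sup>2) * e\<^sup>2 = d w + 1" using e2 by simp
  finally have "K * e\<^sup>2 = (d w + 1) * e\<^sup>2 + (d w + 1)" .
  moreover have "(d w + 1) * e\<^sup>2 \<ge> 0" using dw by simp
  ultimately have Ke: "K * e\<^sup>2 > d w" by linarith
  have Kpos: "K > 0" using K1 dw by linarith
  define h where "h = (\<lambda>x. d x + K * (norm (x - w))\<^sup>2)"
  define S where "S = Q \<inter> cball w 1"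
  have cS: "compact S" unfolding S_def using Qc by (intro closed_Int_compact) auto
  have neS: "S \<noteq> {}" using w by (auto simp: S_def)
  have ctS: "continuous_on S h" unfolding h_def S_def
    by (intro continuous_on_add continuous_on_mult continuous_on_const continuous_on_power
        continuous_on_norm continuous_on_diff continuous_on_id continuous_on_subset[OF dc]) auto
  have "\<exists>m\<in>S. \<forall>y\<in>S. h m \<le> h y" by (rule continuous_attains_inf[OF cS neS ctS])
  then obtain m where m: "m \<in> S" "\<And>y. y \<in> S \<Longrightarrow> h m \<le> h y" by blast
  have mQ: "m \<in> Q" using m(1) by (simp add: S_def)
  have hw: "h w = d w" by (simp add: h_def)
  have hmw: "h m \<le> d w" using m(2)[of w] w hw by (simp add: S_def)
  have glob: "h m \<le> h y" if y: "y \<in> Q" for y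
  proof (cases "y \<in> cball w 1")
    case True then show ?thesis using m(2) y by (simp add: S_def)
  next
    case False
    then have "norm (y - w) > 1" by (simp add: dist_norm norm_minus_commute)
    then have "(norm (y - w))\<^sup>2 \<ge> 1" by (simp add: one_le_power)
    then have "K * (norm (y - w))\<^sup>2 \<ge> K * 1" using Kpos by (intro mult_left_mono) auto
    then have "h y \<ge> K" using dn[OF y] by (simp add: h_def)
    then show ?thesis using hmw K1 by linarith
  qed
  have close: "norm (m - w) < e"
  proof -
    have "K * (norm (m - w))\<^sup>2 \<le> d w" using hmw dn[OF mQ] by (simp add: h_def)
    then have "K * (norm (m - w))\<^sup>2 < K * e\<^sup>2" using Ke by linarith
    then have "(norm (m - w))\<^sup>2 < e\<^sup>2" using Kpos by simp
    then show ?thesis using e by (simp add: power_less_imp_less_base)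
  qed
  have sg: "(- (2 * K) *\<^sub>R (m - w)) \<in> subdiff_on Q d m"
    unfolding subdiff_on_def
  proof safe
    fix y assume y: "y \<in> Q"
    show "d m + - (2 * K) *\<^sub>R (m - w) \<bullet> (y - m) \<le> d y"
    proof (rule le_eps[where C = "K * (norm (y - m))\<^sup>2"])
      fix t :: real assume t: "0 < t" "t \<le> 1"
      define p where "p = t *\<^sub>R y + (1 - t) *\<^sub>R m"
      have pQ: "p \<in> Q" unfolding p_def using convex_comb_in[OF Q y mQ] t by simp
      have dp: "d p \<le> t * d y + (1 - t) * d m" unfolding p_def using sc_convex[OF sc N y mQ] t by simp
      have pw: "p - w = (m - w) + t *\<^sub>R (y - m)" by (simp add: p_def algebra_simps)
      have np: "(norm (p - w))\<^sup>2 = (norm (m - w))\<^sup>2 + 2 * t * ((m - w) \<bullet> (y - m)) + t\<^sup>2 * (norm (y - m))\<^sup>2"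
        unfolding pw by (rule norm_expand)
      have "h m \<le> h p" by (rule glob[OF pQ])
      then have "d m + K * (norm (m - w))\<^sup>2 \<le> t * d y + (1 - t) * d m
          + K * ((norm (m - w))\<^sup>2 + 2 * t * ((m - w) \<bullet> (y - m)) + t\<^sup>2 * (norm (y - m))\<^sup>2)"
        using dp unfolding h_def np by linarith
      then have "t * d m \<le> t * (d y + 2 * K * ((m - w) \<bullet> (y - m)) + t * (K * (norm (y - m))\<^sup>2))"
        by (simp add: algebra_simps power2_eq_square)
      then have "d m \<le> d y + 2 * K * ((m - w) \<bullet> (y - m)) + t * (K * (norm (y - m))\<^sup>2)"
        using t by simp
      then show "d m + - (2 * K) *\<^sub>R (m - w) \<bullet> (y - m) \<le> d y + t * (K * (norm (y - m))\<^sup>2)"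
        by simp
    qed
  qed
  have "m \<in> dom_subdiff Q d" using sg mQ unfolding dom_subdiff_def by auto
  with close show ?thesis by blast
qed

lemma opt_cond:
  fixes d :: "'a::euclidean_space \<Rightarrow> real"
  assumes Qc: "closed Q" and Q: "convex Q" and dc: "continuous_on Q d"
    and dn: "\<And>y. y \<in> Q \<Longrightarrow> d y \<ge> 0" and sc: "strongly_convex_1 N Q d" and N: "is_norm N"
    and dsel: "\<And>y. y \<in> dom_subdiff Q d \<Longrightarrow> d' y \<in> subdiff_on Q d y"
    and dcont: "continuous_on (dom_subdiff Q d) d'"
    and z: "z \<in> Q" and mn: "\<And>y. y \<in> Q \<Longrightarrow> v \<bullet> z + L * d z \<le> v \<bullet> y + L * d y"
    and L: "L > 0" and y: "y \<in> Q"
  shows "(v + L *\<^sub>R d' z) \<bullet> (y - z) \<ge> 0"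
proof (rule ccontr)
  define u where "u = y - z"
  define a where "a = v + L *\<^sub>R d' z"
  define \<eta> where "\<eta> = - (a \<bullet> u)"
  have nu1: "norm u + 1 > 0" using norm_ge_zero[of u] by linarith
  have na1: "norm a + 1 > 0" using norm_ge_zero[of a] by linarith
  assume "\<not> 0 \<le> (v + L *\<^sub>R d' z) \<bullet> (y - z)"
  then have eta: "\<eta> > 0" by (simp add: \<eta>_def a_def u_def)
  have zD: "z \<in> dom_subdiff Q d" using min_subgrad(2)[OF z mn L] .
  define \<epsilon> where "\<epsilon> = \<eta> / (3 * L * (norm u + 1))"
  have epos: "\<epsilon> > 0" unfolding \<epsilon>_def using eta L
    by (intro divide_pos_pos mult_pos_pos; use norm_ge_zero[of u] in linarith)
  obtain \<delta> where dl: "\<delta> > 0" and dlc: "\<And>m. m \<in> dom_subdiff Q d \<Longrightarrow> dist m z < \<delta> \<Longrightarrow> dist (d' m) (d' z) < \<epsilon>"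
    using dcont zD epos unfolding continuous_on_iff by metis
  define \<rho> where "\<rho> = min 1 (\<eta> / (3 * (norm a + 1)))"
  have rho: "\<rho> > 0" "\<rho> \<le> 1" "norm a * \<rho> \<le> \<eta> / 3"
  proof -
    show "\<rho> > 0" "\<rho> \<le> 1" using eta na1 by (auto simp: \<rho>_def)
    have "norm a * \<rho> \<le> (norm a + 1) * (\<eta> / (3 * (norm a + 1)))"
      using eta na1 by (intro mult_mono) (auto simp: \<rho>_def \<open>\<rho> > 0\<close> less_imp_le)
    also have "\<dots> = \<eta> / 3" using na1 by (simp add: field_simps)
    finally show "norm a * \<rho> \<le> \<eta> / 3" .
  qed
  define \<alpha> where "\<alpha> = min 1 (\<delta> / (2 * (norm u + 1)))"
  have al: "\<alpha> > 0" "\<alpha> \<le> 1" using dl nu1 by (auto simp: \<alpha>_def)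
  have al2: "\<alpha> * (norm u + 1) < \<delta>"
  proof -
    have "\<alpha> * (norm u + 1) \<le> (\<delta> / (2 * (norm u + 1))) * (norm u + 1)"
      by (intro mult_right_mono) (auto simp: \<alpha>_def)
    also have "\<dots> = \<delta> / 2" using nu1 by (simp add: field_simps)
    finally show ?thesis using dl by linarith
  qed
  define w where "w = \<alpha> *\<^sub>R y + (1 - \<alpha>) *\<^sub>R z"
  have wQ: "w \<in> Q" unfolding w_def using convex_comb_in[OF Q y z] al by simp
  obtain m where mD: "m \<in> dom_subdiff Q d" and mw: "norm (m - w) < \<alpha> * \<rho>"
    using dense_dom[OF Qc Q dc dn sc N wQ, of "\<alpha> * \<rho>"] al rho by auto
  define r where "r = m - w"
  have mz: "m - z = \<alpha> *\<^sub>R u + r" by (simp add: r_def w_def u_def algebra_simps)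
  have nr: "norm r \<le> \<alpha> * \<rho>" using mw by (simp add: r_def)
  have nmz: "norm (m - z) \<le> \<alpha> * (norm u + 1)"
  proof -
    have "norm (m - z) \<le> norm (\<alpha> *\<^sub>R u) + norm r" unfolding mz by (rule norm_triangle_ineq)
    also have "\<dots> \<le> \<alpha> * norm u + \<alpha> * 1" using al nr rho
      by (simp add: mult_left_mono order_trans)
    finally show ?thesis by (simp add: algebra_simps)
  qed
  have mQ: "m \<in> Q" using mD by (simp add: dom_subdiff_def)
  have "dist m z < \<delta>" using nmz al2 by (simp add: dist_norm)
  then have dd: "norm (d' m - d' z) < \<epsilon>" using dlc[OF mD] by (simp add: dist_norm)
  have key: "(v + L *\<^sub>R d' m) \<bullet> (m - z) \<ge> 0"
  proof -
    have "d z \<ge> d m + d' m \<bullet> (z - m)" using dsel[OF mD] z unfolding subdiff_on_def by auto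
    moreover have "v \<bullet> z + L * d z \<le> v \<bullet> m + L * d m" by (rule mn[OF mQ])
    ultimately have "L * (d' m \<bullet> (m - z)) \<ge> L * (d m - d z)"
      using L by (simp add: inner_diff_right)
    then have "L * (d' m \<bullet> m) - L * (d' m \<bullet> z) \<ge> L * d m - L * d z"
      by (simp add: inner_diff_right right_diff_distrib)
    moreover have "(v + L *\<^sub>R d' m) \<bullet> (m - z) = v \<bullet> m - v \<bullet> z + L * (d' m \<bullet> m) - L * (d' m \<bullet> z)"
      by (simp add: inner_add_left inner_diff_right algebra_simps)
    ultimately show ?thesis using \<open>v \<bullet> z + L * d z \<le> v \<bullet> m + L * d m\<close> by linarith
  qed
  have split: "(v + L *\<^sub>R d' m) \<bullet> (m - z) = \<alpha> * (a \<bullet> u) + a \<bullet> r + L * ((d' m - d' z) \<bullet> (m - z))"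
    unfolding mz a_def by (simp add: inner_add_left inner_add_right inner_diff_left algebra_simps)
  have t1: "a \<bullet> r \<le> \<alpha> * (\<eta> / 3)"
  proof -
    have "a \<bullet> r \<le> norm a * norm r" by (rule norm_cauchy_schwarz)
    also have "\<dots> \<le> norm a * (\<alpha> * \<rho>)" using nr by (simp add: mult_left_mono)
    also have "\<dots> = \<alpha> * (norm a * \<rho>)" by simp
    also have "\<dots> \<le> \<alpha> * (\<eta> / 3)" using rho(3) al by (simp add: mult_left_mono)
    finally show ?thesis .
  qed
  have t2: "L * ((d' m - d' z) \<bullet> (m - z)) \<le> \<alpha> * (\<eta> / 3)"
  proof -
    have "(d' m - d' z) \<bullet> (m - z) \<le> norm (d' m - d' z) * norm (m - z)" by (rule norm_cauchy_schwarz)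
    also have "\<dots> \<le> \<epsilon> * (\<alpha> * (norm u + 1))"
      using dd nmz epos by (intro mult_mono) auto
    finally have "L * ((d' m - d' z) \<bullet> (m - z)) \<le> L * (\<epsilon> * (\<alpha> * (norm u + 1)))"
      using L by simp
    also have "\<dots> = \<alpha> * (\<eta> / 3)"
    proof -
      have nz: "3 * L * (norm u + 1) \<noteq> 0" using L nu1 by simp
      have "\<epsilon> * (3 * L * (norm u + 1)) = \<eta>" unfolding \<epsilon>_def using nz by simp
      moreover have "L * (\<epsilon> * (\<alpha> * (norm u + 1))) = \<alpha> * (\<epsilon> * (3 * L * (norm u + 1))) / 3"
        by (simp add: field_simps)
      ultimately show ?thesis by simp
    qed
    finally show ?thesis .
  qed
  have "\<alpha> * (a \<bullet> u) = - \<alpha> * \<eta>" by (simp add: \<eta>_def)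
  then have "(v + L *\<^sub>R d' m) \<bullet> (m - z) \<le> - \<alpha> * \<eta> + \<alpha> * (\<eta> / 3) + \<alpha> * (\<eta> / 3)"
    using split t1 t2 by linarith
  moreover have "- \<alpha> * \<eta> + \<alpha> * (\<eta> / 3) + \<alpha> * (\<eta> / 3) < 0" using al eta
    by (simp add: algebra_simps)
  ultimately show False using key by linarith
qed

theorem theorem2:
  fixes N :: "'a::euclidean_space \<Rightarrow> real"
    and Q :: "'a set" and f :: "'a \<Rightarrow> real" and f' :: "'a \<Rightarrow> 'a" and Lf :: real
    and d :: "'a \<Rightarrow> real" and d' :: "'a \<Rightarrow> 'a"
    and xs :: 'a and T :: nat and \<gamma> :: "nat \<Rightarrow> real"
    and Ls :: "nat \<Rightarrow> real" and x z xh u :: "nat \<Rightarrow> 'a"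
  assumes N: "is_norm N"
    and Q: "closed Q" "convex Q"
    and f_convex: "convex_on UNIV f"
    and f_grad: "\<And>y. (f has_derivative (\<lambda>h. f' y \<bullet> h)) (at y)"
    and f_attains: "\<exists>y\<in>Q. \<forall>w\<in>Q. f y \<le> f w"
    and Lf_pos: "Lf > 0"
    and f_lip: "\<And>y w. y \<in> Q \<Longrightarrow> w \<in> Q \<Longrightarrow> dual_norm N (f' y - f' w) \<le> Lf * N (y - w)"
    and d_nonneg: "\<And>y. y \<in> Q \<Longrightarrow> d y \<ge> 0"
    and d_cont: "continuous_on Q d"
    and d_sc: "strongly_convex_1 N Q d"
    and d'_sel: "\<And>y. y \<in> dom_subdiff Q d \<Longrightarrow> d' y \<in> subdiff_on Q d y"
    and d'_cont: "continuous_on (dom_subdiff Q d) d'"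
    and xs_min: "argmin_on Q f xs"
    and \<gamma>0: "0 < \<gamma> 0" "\<gamma> 0 \<le> 1"
    and \<gamma>_nonneg: "\<And>t. t \<le> T + 1 \<Longrightarrow> \<gamma> t \<ge> 0"
    and \<gamma>_sq: "\<And>t. t \<le> T + 1 \<Longrightarrow> (\<gamma> t)\<^sup>2 \<le> Gam \<gamma> t"
    and L0: "Ls 0 = Lf"
    and x0: "argmin_on Q d (x 0)" and center0: "d (x 0) = 0"
    and u0: "argmin_on Q (\<lambda>y. \<gamma> 0 * (f (x 0) + f' (x 0) \<bullet> (y - x 0)) + Ls 0 * d y) (u 0)"
    and z0: "z 0 = u 0"
    and Lt: "\<And>t. 1 \<le> t \<Longrightarrow> t \<le> T \<Longrightarrow> 0 < Ls t \<and> Ls t \<le> Lf \<and>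
               f (u t) \<le> f (x t) + f' (x t) \<bullet> (u t - x t) + Ls t / 2 * (N (u t - x t))\<^sup>2"
    and zt: "\<And>t. 1 \<le> t \<Longrightarrow> t \<le> T \<Longrightarrow>
               argmin_on Q (\<lambda>y. (\<Sum>k\<le>t. \<gamma> k * (f (x k) + f' (x k) \<bullet> (y - x k))) + Ls t * d y) (z t)"
    and xt: "\<And>t. t \<le> T \<Longrightarrow>
               x (t + 1) = (\<gamma> (t + 1) / Gam \<gamma> (t + 1)) *\<^sub>R z t + (1 - \<gamma> (t + 1) / Gam \<gamma> (t + 1)) *\<^sub>R u t"
    and xht: "\<And>t. t \<le> T \<Longrightarrow>
               is_prox Q d d' (z t) ((\<gamma> (t + 1) / Ls t) *\<^sub>R f' (x (t + 1))) (xh (t + 1))"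
    and ut: "\<And>t. t \<le> T \<Longrightarrow>
               u (t + 1) = (\<gamma> (t + 1) / Gam \<gamma> (t + 1)) *\<^sub>R xh (t + 1) + (1 - \<gamma> (t + 1) / Gam \<gamma> (t + 1)) *\<^sub>R u t"
  shows "f (u T) - f xs \<le> 1 / Gam \<gamma> T * (Ls T * d xs +
           (\<Sum>t<T. (Ls t - Ls (t + 1)) * (d (z (t + 1)) - 1/2 * (N (z t - xh (t + 1)))\<^sup>2)))"
proof -
  define lin where "lin = (\<lambda>k y. f (x k) + f' (x k) \<bullet> (y - x k))"
  define psi where "psi = (\<lambda>t y. (\<Sum>k\<le>t. \<gamma> k * lin k y) + Ls t * d y)"
  define R where "R = (\<lambda>t. \<Sum>s<t. (Ls s - Ls (s + 1)) * (d (z (s + 1)) - 1/2 * (N (z s - xh (s + 1)))\<^sup>2))"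
  define A where "A = (\<lambda>t. \<Sum>k\<le>t. \<gamma> k * (f (x k) - f' (x k) \<bullet> x k))"
  define c where "c = (\<lambda>t. \<Sum>k\<le>t. \<gamma> k *\<^sub>R f' (x k))"
  have psiform: "psi t y = A t + c t \<bullet> y + Ls t * d y" for t y
  proof -
    have "\<And>k. \<gamma> k * lin k y = \<gamma> k * (f (x k) - f' (x k) \<bullet> x k) + (\<gamma> k *\<^sub>R f' (x k)) \<bullet> y"
      by (simp add: lin_def inner_diff_right algebra_simps)
    then show ?thesis by (simp add: psi_def A_def c_def sum.distrib inner_sum_left)
  qed
  have GamSuc: "Gam \<gamma> (Suc t) = Gam \<gamma> t + \<gamma> (Suc t)" for t by (simp add: Gam_def)
  have Gam_ge: "Gam \<gamma> t \<ge> \<gamma> 0" if "t \<le> T + 1" for t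
    using that
  proof (induction t)
    case 0 then show ?case by (simp add: Gam_def)
  next
    case (Suc t) then show ?case using GamSuc[of t] \<gamma>_nonneg[of "Suc t"] by simp
  qed
  have Lpos: "Ls t > 0" if "t \<le> T" for t
    using that L0 Lf_pos Lt[of t] by (cases t) auto
  have zmin: "argmin_on Q (psi t) (z t)" if "t \<le> T" for t
  proof (cases t)
    case 0 then show ?thesis using u0 z0 by (simp add: psi_def lin_def)
  next
    case (Suc s) then show ?thesis using zt[of t] that by (simp add: psi_def lin_def)
  qed
  have zQ: "z t \<in> Q" if "t \<le> T" for t using zmin[OF that] by (simp add: argmin_on_def)
  have mnz: "c t \<bullet> z t + Ls t * d (z t) \<le> c t \<bullet> y + Ls t * d y" if "t \<le> T" "y \<in> Q" for t y
    using zmin[OF that(1)] that(2) unfolding argmin_on_def psiform by force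
  have zD: "d' (z t) \<in> subdiff_on Q d (z t)" if "t \<le> T" for t
    using d'_sel min_subgrad(2)[OF zQ[OF that] mnz[OF that] Lpos[OF that]] by blast
  have psiopt: "psi t y - psi t (z t) \<ge> Ls t * bregman d d' (z t) y" if "t \<le> T" "y \<in> Q" for t y
  proof -
    have "(c t + Ls t *\<^sub>R d' (z t)) \<bullet> (y - z t) \<ge> 0"
      by (rule opt_cond[OF Q d_cont d_nonneg d_sc N d'_sel d'_cont zQ[OF that(1)] mnz[OF that(1)] Lpos[OF that(1)] that(2)])
    moreover have "psi t y - psi t (z t) - Ls t * bregman d d' (z t) y = (c t + Ls t *\<^sub>R d' (z t)) \<bullet> (y - z t)"
      unfolding psiform bregman_def by (simp add: inner_add_left inner_diff_right algebra_simps)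
    ultimately show ?thesis by linarith
  qed
  have main: "Gam \<gamma> t * f (u t) \<le> psi t (z t) + R t" if "t \<le> T" for t
    using that
  proof (induction t)
    case 0
    have u0Q: "u 0 \<in> Q" and x0Q: "x 0 \<in> Q" using u0 x0 by (auto simp: argmin_on_def)
    have sm: "f (u 0) \<le> lin 0 (u 0) + Lf / 2 * (N (u 0 - x 0))\<^sup>2"
      using smooth_ineq[OF N Q(2) f_grad f_lip _ x0Q u0Q] Lf_pos by (simp add: lin_def)
    have gr: "d (x 0) + 1 / 2 * (N (u 0 - x 0))\<^sup>2 \<le> d (u 0)"
    proof (rule growth[where g=d and p="x 0" and y="u 0"])
      fix a :: real assume a: "0 \<le> a" "a \<le> 1"
      show "d (a *\<^sub>R u 0 + (1 - a) *\<^sub>R x 0) \<le> a * d (u 0) + (1 - a) * d (x 0) - 1 / 2 * a * (1 - a) * (N (u 0 - x 0))\<^sup>2"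
        using d_sc u0Q x0Q a unfolding strongly_convex_1_def by blast
    next
      fix a :: real assume a: "0 \<le> a" "a \<le> 1"
      show "d (x 0) \<le> d (a *\<^sub>R u 0 + (1 - a) *\<^sub>R x 0)"
        using x0 convex_comb_in[OF Q(2) u0Q x0Q a] by (simp add: argmin_on_def)
    qed
    have Nnn: "0 \<le> Lf / 2 * (N (u 0 - x 0))\<^sup>2" using Lf_pos by simp
    have "\<gamma> 0 * (Lf / 2 * (N (u 0 - x 0))\<^sup>2) \<le> 1 * (Lf / 2 * (N (u 0 - x 0))\<^sup>2)"
      using \<gamma>0 Nnn by (intro mult_right_mono) auto
    moreover have "Lf * (1 / 2 * (N (u 0 - x 0))\<^sup>2) \<le> Lf * d (u 0)"
      using gr center0 Lf_pos by (intro mult_left_mono) auto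
    moreover have "\<gamma> 0 * f (u 0) \<le> \<gamma> 0 * (lin 0 (u 0) + Lf / 2 * (N (u 0 - x 0))\<^sup>2)"
      using sm \<gamma>0 by (intro mult_left_mono) auto
    ultimately have "\<gamma> 0 * f (u 0) \<le> \<gamma> 0 * lin 0 (u 0) + Lf * d (u 0)"
      by (simp add: algebra_simps)
    then show ?case using z0 L0 by (simp add: Gam_def psi_def R_def)
  next
    case (Suc t)
    have tT: "t \<le> T" using Suc.prems by simp
    define G where "G = Gam \<gamma> t"
    define G1 where "G1 = Gam \<gamma> (Suc t)"
    define g1 where "g1 = \<gamma> (Suc t)"
    define \<tau> where "\<tau> = g1 / G1"
    define L where "L = Ls t"
    define L1 where "L1 = Ls (Suc t)"
    define N2 where "N2 = (N (xh (Suc t) - z t))\<^sup>2"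
    have Gpos: "G > 0" using Gam_ge[of t] tT \<gamma>0 by (simp add: G_def)
    have g1nn: "g1 \<ge> 0" using \<gamma>_nonneg[of "Suc t"] tT by (simp add: g1_def)
    have G1eq: "G1 = G + g1" by (simp add: G1_def G_def g1_def GamSuc)
    have G1pos: "G1 > 0" using Gpos g1nn G1eq by simp
    have sq: "g1\<^sup>2 \<le> G1" using \<gamma>_sq[of "Suc t"] tT by (simp add: g1_def G1_def)
    have Lp: "L > 0" using Lpos[OF tT] by (simp add: L_def)
    have L1p: "L1 > 0" using Lt[of "Suc t"] Suc.prems by (simp add: L1_def)
    have N2nn: "N2 \<ge> 0" by (simp add: N2_def)
    have xhQ: "xh (Suc t) \<in> Q" using xht[OF tT] by (simp add: is_prox_def argmin_on_def)
    have z1Q: "z (Suc t) \<in> Q" using zQ[OF Suc.prems] .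
    have xeq: "x (Suc t) = \<tau> *\<^sub>R z t + (1 - \<tau>) *\<^sub>R u t" using xt[OF tT] by (simp add: \<tau>_def g1_def G1_def)
    have ueq: "u (Suc t) = \<tau> *\<^sub>R xh (Suc t) + (1 - \<tau>) *\<^sub>R u t" using ut[OF tT] by (simp add: \<tau>_def g1_def G1_def)
    have diff: "u (Suc t) - x (Suc t) = \<tau> *\<^sub>R (xh (Suc t) - z t)"
      unfolding xeq ueq by (simp add: algebra_simps)
    have s1: "f (u (Suc t)) \<le> lin (Suc t) (u (Suc t)) + L1 / 2 * (\<tau>\<^sup>2 * N2)"
    proof -
      have "f (u (Suc t)) \<le> f (x (Suc t)) + f' (x (Suc t)) \<bullet> (u (Suc t) - x (Suc t)) + L1 / 2 * (N (u (Suc t) - x (Suc t)))\<^sup>2"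
        using Lt[of "Suc t"] Suc.prems by (simp add: L1_def)
      moreover have "(N (u (Suc t) - x (Suc t)))\<^sup>2 = \<tau>\<^sup>2 * N2"
        unfolding diff N2_def N_basic(5)[OF N] by (simp add: power_mult_distrib)
      ultimately show ?thesis by (simp add: lin_def)
    qed
    have s4: "G1 * \<tau>\<^sup>2 \<le> 1"
    proof -
      have "G1 * \<tau>\<^sup>2 = g1\<^sup>2 / G1" using G1pos by (simp add: \<tau>_def power2_eq_square)
      also have "\<dots> \<le> 1" using sq G1pos by simp
      finally show ?thesis .
    qed
    have s4': "G1 * (L1 / 2 * (\<tau>\<^sup>2 * N2)) \<le> L1 / 2 * N2"
    proof -
      have "G1 * (L1 / 2 * (\<tau>\<^sup>2 * N2)) = (G1 * \<tau>\<^sup>2) * (L1 / 2 * N2)" by (simp add: algebra_simps)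
      also have "\<dots> \<le> 1 * (L1 / 2 * N2)" using s4 L1p N2nn by (intro mult_right_mono) auto
      finally show ?thesis by simp
    qed
    have s5: "G1 * lin (Suc t) (u (Suc t)) = G * lin (Suc t) (u t) + g1 * lin (Suc t) (xh (Suc t))"
    proof -
      have t1: "G1 * \<tau> = g1" using G1pos by (simp add: \<tau>_def)
      have t2: "G1 * (1 - \<tau>) = G" using t1 G1eq by (simp add: algebra_simps)
      have "lin (Suc t) (u (Suc t)) = \<tau> * lin (Suc t) (xh (Suc t)) + (1 - \<tau>) * lin (Suc t) (u t)"
        unfolding ueq lin_def by (simp add: inner_add_right inner_diff_right algebra_simps)
      note e = this
      have "G1 * lin (Suc t) (u (Suc t)) = (G1 * \<tau>) * lin (Suc t) (xh (Suc t)) + (G1 * (1 - \<tau>)) * lin (Suc t) (u t)"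
        unfolding e by (simp add: algebra_simps)
      then show ?thesis using t1 t2 by simp
    qed
    have s6: "lin (Suc t) (u t) \<le> f (u t)" unfolding lin_def by (rule grad_ineq[OF f_convex f_grad])
    have s7: "G * f (u t) \<le> psi t (z t) + R t" using Suc.IH tT by (simp add: G_def)
    have s8: "g1 * (f' (x (Suc t)) \<bullet> (xh (Suc t) - z t)) + L * bregman d d' (z t) (xh (Suc t))
        \<le> g1 * (f' (x (Suc t)) \<bullet> (z (Suc t) - z t)) + L * bregman d d' (z t) (z (Suc t))"
    proof -
      have "(g1 / L) *\<^sub>R f' (x (Suc t)) \<bullet> (xh (Suc t) - z t) + bregman d d' (z t) (xh (Suc t))
         \<le> (g1 / L) *\<^sub>R f' (x (Suc t)) \<bullet> (z (Suc t) - z t) + bregman d d' (z t) (z (Suc t))"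
        using xht[OF tT] z1Q by (simp add: is_prox_def argmin_on_def g1_def L_def)
      then have "L * ((g1 / L) * (f' (x (Suc t)) \<bullet> (xh (Suc t) - z t)) + bregman d d' (z t) (xh (Suc t)))
         \<le> L * ((g1 / L) * (f' (x (Suc t)) \<bullet> (z (Suc t) - z t)) + bregman d d' (z t) (z (Suc t)))"
        using Lp by (intro mult_left_mono) auto
      then show ?thesis using Lp by (simp add: distrib_left)
    qed
    have s9: "1/2 * N2 \<le> bregman d d' (z t) (xh (Suc t))"
      unfolding N2_def by (rule V_growth[where d'=d', OF N Q(2) d_sc zQ[OF tT] zD[OF tT] xhQ])
    have s10: "psi t (z (Suc t)) - psi t (z t) \<ge> L * bregman d d' (z t) (z (Suc t))"
      using psiopt[OF tT z1Q] by (simp add: L_def)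
    have s11: "psi (Suc t) (z (Suc t)) = psi t (z (Suc t)) + g1 * lin (Suc t) (z (Suc t)) + (L1 - L) * d (z (Suc t))"
      by (simp add: psi_def g1_def L_def L1_def algebra_simps)
    have s12: "R (Suc t) = R t + (L - L1) * (d (z (Suc t)) - 1/2 * N2)"
      using N_basic(4)[OF N, of "z t" "xh (Suc t)"] by (simp add: R_def L_def L1_def N2_def)
    have s13: "g1 * lin (Suc t) (xh (Suc t)) - g1 * lin (Suc t) (z (Suc t))
        = g1 * (f' (x (Suc t)) \<bullet> (xh (Suc t) - z t)) - g1 * (f' (x (Suc t)) \<bullet> (z (Suc t) - z t))"
      by (simp add: lin_def inner_diff_right algebra_simps)
    have s9': "L * (1/2 * N2) \<le> L * bregman d d' (z t) (xh (Suc t))"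
      using s9 Lp by (intro mult_left_mono) auto
    have s6': "G * lin (Suc t) (u t) \<le> G * f (u t)" using s6 Gpos by (intro mult_left_mono) auto
    have s1': "G1 * f (u (Suc t)) \<le> G1 * lin (Suc t) (u (Suc t)) + G1 * (L1 / 2 * (\<tau>\<^sup>2 * N2))"
    proof -
      have "G1 * f (u (Suc t)) \<le> G1 * (lin (Suc t) (u (Suc t)) + L1 / 2 * (\<tau>\<^sup>2 * N2))"
        using s1 G1pos by (intro mult_left_mono) auto
      then show ?thesis by (simp only: distrib_left)
    qed
    have "G1 * f (u (Suc t)) \<le> psi (Suc t) (z (Suc t)) + R (Suc t)"
    proof -
      have s4'': "G1 * (L1 / 2 * (\<tau>\<^sup>2 * N2)) \<le> (L1 * N2) / 2" using s4' by simp
      have s9'': "(L * N2) / 2 \<le> L * bregman d d' (z t) (xh (Suc t))" using s9' by simp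
      have s11': "psi (Suc t) (z (Suc t)) = psi t (z (Suc t)) + g1 * lin (Suc t) (z (Suc t)) + L1 * d (z (Suc t)) - L * d (z (Suc t))"
        using s11 by (simp add: algebra_simps)
      have s12': "R (Suc t) = R t + L * d (z (Suc t)) - L1 * d (z (Suc t)) - (L * N2) / 2 + (L1 * N2) / 2"
        using s12 by (simp add: algebra_simps diff_divide_distrib)
      show ?thesis using s1' s4'' s5 s6' s7 s8 s9'' s10 s11' s12' s13 by linarith
    qed
    then show ?case by (simp add: G1_def)
  qed
  have GT: "Gam \<gamma> T > 0" using Gam_ge[of T] \<gamma>0 by simp
  have xsQ: "xs \<in> Q" using xs_min by (simp add: argmin_on_def)
  have "psi T (z T) \<le> psi T xs" using zmin[of T] xsQ by (simp add: argmin_on_def)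
  also have "psi T xs \<le> Gam \<gamma> T * f xs + Ls T * d xs"
  proof -
    have "(\<Sum>k\<le>T. \<gamma> k * lin k xs) \<le> (\<Sum>k\<le>T. \<gamma> k * f xs)"
    proof (rule sum_mono)
      fix k assume "k \<in> {..T}"
      then have "\<gamma> k \<ge> 0" using \<gamma>_nonneg[of k] by simp
      moreover have "lin k xs \<le> f xs" unfolding lin_def by (rule grad_ineq[OF f_convex f_grad])
      ultimately show "\<gamma> k * lin k xs \<le> \<gamma> k * f xs" by (simp add: mult_left_mono)
    qed
    then show ?thesis by (simp add: psi_def Gam_def sum_distrib_right)
  qed
  finally have "Gam \<gamma> T * f (u T) \<le> Gam \<gamma> T * f xs + Ls T * d xs + R T" using main[of T] by simp
  then have "Gam \<gamma> T * (f (u T) - f xs) \<le> Ls T * d xs + R T" by (simp add: algebra_simps)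
  then have "f (u T) - f xs \<le> (Ls T * d xs + R T) / Gam \<gamma> T" using GT by (simp add: field_simps)
  then show ?thesis by (simp add: R_def)
qed


end
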